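(* Let $f\ge0$ be integrable on $[-\pi,\pi]$ with $\int f>0$ and such that $\lim_{n\to\infty}\sigma_{n+1}^2(f)/\sigma_n^2(f)=1$. If $t(\lambda)$ is a nonnegative trigonometric polynomial, then $$\liminf_{n\to\infty}\frac{\sigma_n^2(ft)}{\sigma_n^2(f)}\ge t(0).$$
   Context: For a nonnegative integrable weight $w$ on $[-\pi,\pi]$, $\sigma_n^2(w)=\min_{q\in\mathcal{Q}_n(1)}\int_{-\pi}^{\pi}|q(e^{i\lambda})|^2w(\lambda)\,d\lambda$, where $\mathcal{Q}_n(1)$ is the set of complex polynomials of degree at most $n$ with $q(1)=1$ (the variance of the BLUE of a constant mean from $n+1$ observations of a stationary process with spectral density $w$). *)

theory Defs
  imports "HOL-Analysis.Analysis" "HOL-Computational_Algebra.Polynomial"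
begin

definition sigma2 :: "(real \<Rightarrow> real) \<Rightarrow> nat \<Rightarrow> real" where
  "sigma2 w n = Inf {LBINT x:{-pi..pi}. (cmod (poly q (cis x)))\<^sup>2 * w x
                     | q :: complex poly. degree q \<le> n \<and> poly q 1 = 1}"

definition trig_poly :: "(real \<Rightarrow> real) \<Rightarrow> bool" where
  "trig_poly t \<longleftrightarrow> (\<exists>m (a :: nat \<Rightarrow> real) (b :: nat \<Rightarrow> real).
      \<forall>x. t x = (\<Sum>k\<le>m. a k * cos (real k * x) + b k * sin (real k * x)))"

end

theory Submission
  imports Defs "HOL-Complex_Analysis.Complex_Analysis"
begin


lemma cis_inj_small:
  assumes "cis a = cis b" "\<bar>a - b\<bar> < pi" shows "a = b"
proof -
  have "cis (a - b) = 1" using assms by (simp add: cis_divide[symmetric])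
  moreover have "Arg 1 = 0" by (rule cis_Arg_unique) auto
  ultimately have "Arg (cis (a - b)) = 0" by simp
  moreover have "Arg (cis (a - b)) = a - b"
    by (rule cis_Arg_unique) (use assms(2) in auto)
  ultimately show ?thesis by simp
qed

lemma infinite_range_cis: "infinite (range cis)"
proof
  assume "finite (range cis)"
  hence "finite (cis ` {-pi/2<..<pi/2})" by (rule finite_subset[rotated]) auto
  moreover have "inj_on cis {-pi/2<..<pi/2}"
  proof (rule inj_onI)
    fix a b assume "a \<in> {-pi/2<..<pi/2}" "b \<in> {-pi/2<..<pi/2}" "cis a = cis b"
    thus "a = b" using cis_inj_small[of a b] by auto
  qed
  ultimately have "finite {-pi/2<..<pi/2}" using finite_imageD by blast
  moreover have "infinite {-pi/2<..<(pi/2::real)}" 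
    by (rule infinite_Ioo) simp
  ultimately show False by blast
qed

lemma circle_poly_eq:
  fixes p q :: "complex poly"
  assumes "\<And>x. poly p (cis x) = poly q (cis x)" shows "p = q"
proof (rule ccontr)
  assume "p \<noteq> q"
  hence "finite {z. poly (p - q) z = 0}" by (intro poly_roots_finite) simp
  moreover have "range cis \<subseteq> {z. poly (p - q) z = 0}" using assms by auto
  ultimately show False using infinite_range_cis finite_subset by blast
qed

lemma poly_root_exists:
  fixes p :: "complex poly" assumes "degree p > 0" obtains z where "poly p z = 0"
proof -
  have "coeff p 0 = 0 \<or> (\<exists>i\<in>{1..degree p}. coeff p i \<noteq> 0)"
    using assms by (intro disjI2 bexI[of _ "degree p"]) (auto simp: leading_coeff_0_iff)
  then obtain z where "(\<Sum>i\<le>degree p. coeff p i * z^i) = 0"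
    using fundamental_theorem_of_algebra by blast
  thus ?thesis using that by (simp add: poly_altdef)
qed
definition Ecirc :: "complex poly \<Rightarrow> int \<Rightarrow> real \<Rightarrow> complex" where
  "Ecirc F m x = cis (- (of_int m * x)) * poly F (cis x)"

definition NN :: "complex poly \<Rightarrow> int \<Rightarrow> bool" where
  "NN F m \<longleftrightarrow> (\<forall>x. Ecirc F m x \<in> \<real> \<and> 0 \<le> Re (Ecirc F m x))"

lemma cis_pow: "cis x ^ n = cis (real n * x)" by (rule Complex.DeMoivre)

lemma sym_root:
  fixes F :: "complex poly"
  assumes real: "\<And>x. Ecirc F m x \<in> \<real>" and a0: "\<alpha> \<noteq> 0" and root: "poly F \<alpha> = 0"
  shows "poly F (inverse (cnj \<alpha>)) = 0"
proof -
  define Fc where "Fc = map_poly cnj F"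
  define R where "R = reflect_poly Fc"
  define d where "d = degree Fc"
  define a where "a = d + nat (- 2 * m)"
  define b where "b = nat (2 * m)"
  have key: "poly (monom 1 a * F) (cis x) = poly (monom 1 b * R) (cis x)" for x
  proof -
    let ?z = "cis x"
    have z0: "?z \<noteq> 0" by simp
    have "cnj (Ecirc F m x) = Ecirc F m x" using real[of x] Reals_cnj_iff by blast
    moreover have "cnj (Ecirc F m x) = cis (of_int m * x) * poly Fc (inverse ?z)"
    proof -
      have h1: "1 / cis (-x) = cis x" by (simp add: divide_inverse)
      show ?thesis by (simp add: Ecirc_def Fc_def cis_cnj inverse_eq_divide cis_divide[symmetric] h1)
    qed
    moreover have "poly R ?z = ?z ^ d * poly Fc (inverse ?z)"
      unfolding R_def d_def by (rule poly_reflect_poly_nz) simp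
    ultimately have eq: "cis (- (of_int m * x)) * poly F ?z = cis (of_int m * x) * (poly R ?z / ?z ^ d)"
      by (simp add: Ecirc_def)
    have "poly (monom 1 a * F) ?z = ?z ^ a * poly F ?z" by (simp add: poly_monom)
    also have "\<dots> = cis (real a * x) * poly F ?z" by (simp add: cis_pow)
    also have "\<dots> = cis (real a * x + of_int m * x) * (cis (- (of_int m * x)) * poly F ?z)"
    proof -
      have "cis (real a * x) = cis (real a * x + of_int m * x) * cis (- (of_int m * x))" by (simp add: cis_mult)
      thus ?thesis by (simp add: mult.assoc)
    qed
    also have "\<dots> = cis (real a * x + of_int m * x) * (cis (of_int m * x) * (poly R ?z / cis (real d * x)))"
      by (simp add: eq cis_pow)
    also have "\<dots> = cis (real a * x + 2 * of_int m * x - real d * x) * poly R ?z"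
    proof -
      have "cis (real a * x + of_int m * x) * cis (of_int m * x) / cis (real d * x) = cis (real a * x + 2 * of_int m * x - real d * x)"
        by (simp add: cis_mult cis_divide algebra_simps)
      thus ?thesis by (auto simp: field_simps)
    qed
    also have r: "real a + 2 * of_int m - real d = real b"
      unfolding a_def b_def by (cases "m \<ge> 0") (simp_all add: of_nat_nat)
    have "real a * x + 2 * of_int m * x - real d * x = real b * x"
      by (simp add: r[symmetric] algebra_simps)
    also have "cis (real b * x) * poly R ?z = poly (monom 1 b * R) ?z" by (simp add: poly_monom cis_pow)
    finally show ?thesis .
  qed
  have "monom 1 a * F = monom 1 b * R" by (rule circle_poly_eq) (rule key)
  hence "poly (monom 1 a * F) \<alpha> = poly (monom 1 b * R) \<alpha>" by simp
  hence "poly R \<alpha> = 0" using root a0 by (simp add: poly_monom)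
  moreover have "poly R \<alpha> = \<alpha> ^ d * poly Fc (inverse \<alpha>)"
    unfolding R_def d_def by (rule poly_reflect_poly_nz) fact
  ultimately have "poly Fc (inverse \<alpha>) = 0" using a0 by simp
  thus ?thesis by (simp add: Fc_def)
qed

lemma Ecirc_exp: "Ecirc F m x = (\<lambda>w. exp (- (\<i> * of_int m * w)) * poly F (exp (\<i> * w))) (of_real x)"
  by (simp add: Ecirc_def cis_conv_exp mult.assoc)

lemma circle_root_deriv:
  assumes nn: "NN F m" and root: "poly F (cis \<theta>) = 0"
  shows "poly (pderiv F) (cis \<theta>) = 0"
proof -
  define \<Phi> where "\<Phi> = (\<lambda>w. exp (- (\<i> * of_int m * w)) * poly F (exp (\<i> * w)))"
  define D where "D = exp (- (\<i> * of_int m * of_real \<theta>)) * (poly (pderiv F) (exp (\<i> * of_real \<theta>)) * (\<i> * exp (\<i> * of_real \<theta>)))"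
  have d1: "(\<Phi> has_field_derivative
       (- (\<i> * of_int m)) * exp (- (\<i> * of_int m * of_real \<theta>)) * poly F (exp (\<i> * of_real \<theta>)) + D) (at (of_real \<theta>))"
    unfolding \<Phi>_def D_def
    by (rule derivative_eq_intros DERIV_chain2[OF poly_DERIV] refl | simp)+
  have "poly F (exp (\<i> * of_real \<theta>)) = 0" using root by (simp add: cis_conv_exp)
  with d1 have d: "(\<Phi> has_field_derivative D) (at (of_real \<theta>))" by simp
  have dv: "((\<lambda>x. \<Phi> (of_real x)) has_vector_derivative D) (at \<theta>)"
    by (rule has_vector_derivative_real_field[OF d])
  have E: "\<Phi> (of_real x) = Ecirc F m x" for x unfolding \<Phi>_def by (simp add: Ecirc_exp)
  have E0: "Ecirc F m \<theta> = 0" using root by (simp add: Ecirc_def)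
  have dre: "((\<lambda>x. Re (\<Phi> (of_real x))) has_real_derivative Re D) (at \<theta>)"
    by (rule has_field_derivative_Re[OF dv])
  have dim: "((\<lambda>x. Im (\<Phi> (of_real x))) has_real_derivative Im D) (at \<theta>)"
    by (rule has_field_derivative_Im[OF dv])
  have "\<forall>y. \<bar>\<theta> - y\<bar> < 1 \<longrightarrow> Re (\<Phi> (of_real \<theta>)) \<le> Re (\<Phi> (of_real y))"
    using nn E E0 unfolding NN_def by auto
  from DERIV_local_min[OF dre _ this] have "Re D = 0" by simp
  moreover have "\<forall>y. \<bar>\<theta> - y\<bar> < 1 \<longrightarrow> Im (\<Phi> (of_real \<theta>)) \<le> Im (\<Phi> (of_real y))"
    using nn E E0 unfolding NN_def by (auto simp: complex_is_Real_iff)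
  from DERIV_local_min[OF dim _ this] have "Im D = 0" by simp
  ultimately have "D = 0" by (simp add: complex_eq_iff)
  thus ?thesis by (simp add: D_def cis_conv_exp)
qed

lemma Ecirc_cont: "isCont (Ecirc F m) \<theta>"
proof -
  define \<Phi> where "\<Phi> = (\<lambda>w. exp (- (\<i> * of_int m * w)) * poly F (exp (\<i> * w)))"
  have d1: "(\<Phi> has_field_derivative
       (- (\<i> * of_int m)) * exp (- (\<i> * of_int m * of_real \<theta>)) * poly F (exp (\<i> * of_real \<theta>)) +
        exp (- (\<i> * of_int m * of_real \<theta>)) * (poly (pderiv F) (exp (\<i> * of_real \<theta>)) * (\<i> * exp (\<i> * of_real \<theta>)))) (at (of_real \<theta>))"
    unfolding \<Phi>_def
    by (rule derivative_eq_intros DERIV_chain2[OF poly_DERIV] refl | simp)+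
  have E: "(\<lambda>x. \<Phi> (of_real x)) = Ecirc F m" unfolding \<Phi>_def by (simp add: Ecirc_exp fun_eq_iff)
  have "continuous (at \<theta>) (\<lambda>x. \<Phi> (of_real x))"
    by (rule has_vector_derivative_continuous[OF has_vector_derivative_real_field[OF d1]])
  thus ?thesis by (simp add: E)
qed

lemma NN_off:
  assumes off: "\<And>x. cis x \<noteq> \<alpha> \<Longrightarrow> Ecirc F m x \<in> \<real> \<and> 0 \<le> Re (Ecirc F m x)"
  shows "NN F m"
  unfolding NN_def
proof
  fix x0
  show "Ecirc F m x0 \<in> \<real> \<and> 0 \<le> Re (Ecirc F m x0)"
  proof (cases "cis x0 = \<alpha>")
    case False thus ?thesis using off by blast
  next
    case True
    have cl: "closed (\<real> \<inter> {w. 0 \<le> Re w})" by (rule closed_Real_halfspace_Re_ge)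
    have ev: "eventually (\<lambda>x. Ecirc F m x \<in> \<real> \<inter> {w. 0 \<le> Re w}) (at x0)"
    proof -
      have "\<forall>y. y \<noteq> x0 \<and> dist y x0 < pi \<longrightarrow> Ecirc F m y \<in> \<real> \<inter> {w. 0 \<le> Re w}"
      proof (intro allI impI)
        fix y :: real assume y: "y \<noteq> x0 \<and> dist y x0 < pi"
        have "cis y \<noteq> cis x0"
        proof
          assume "cis y = cis x0"
          hence "y = x0" using cis_inj_small[of y x0] y by (auto simp: dist_real_def)
          thus False using y by simp
        qed
        thus "Ecirc F m y \<in> \<real> \<inter> {w. 0 \<le> Re w}" using off[of y] True by simp
      qed
      thus ?thesis unfolding eventually_at by (intro exI[of _ pi]) auto
    qed
    have lim: "(Ecirc F m \<longlongrightarrow> Ecirc F m x0) (at x0)"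
      using Ecirc_cont[where F=F and m=m and \<theta>=x0] by (simp add: isCont_def)
    have "Ecirc F m x0 \<in> \<real> \<inter> {w. 0 \<le> Re w}"
      by (rule Lim_in_closed_set[OF cl ev _ lim]) simp
    thus ?thesis by simp
  qed
qed

lemma factor_identity:
  fixes F2 :: "complex poly"
  assumes a0: "\<alpha> \<noteq> 0"
  shows "Ecirc ([:-\<alpha>,1:] * [:-inverse (cnj \<alpha>),1:] * F2) m x =
         of_real ((cmod (cis x - \<alpha>))\<^sup>2) * Ecirc (smult (- inverse (cnj \<alpha>)) F2) (m - 1) x"
proof -
  let ?z = "cis x"
  have zw: "?z * cnj ?z = 1" by (simp add: cis_cnj cis_mult)
  have n2: "of_real ((cmod (?z - \<alpha>))\<^sup>2) = (?z - \<alpha>) * (cnj ?z - cnj \<alpha>)"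
    by (subst complex_norm_square) simp
  have cm: "cis (- (of_int (m - 1) * x)) = cis (- (of_int m * x)) * ?z"
    by (simp add: cis_mult algebra_simps)
  have ca: "cnj \<alpha> \<noteq> 0" using a0 by simp
  have "(?z - \<alpha>) * (cnj ?z - cnj \<alpha>) * ?z * (- inverse (cnj \<alpha>))
      = (?z - \<alpha>) * (- inverse (cnj \<alpha>)) * (?z * cnj ?z - ?z * cnj \<alpha>)"
    by (simp add: algebra_simps)
  also have "\<dots> = (?z - \<alpha>) * (?z - inverse (cnj \<alpha>))"
    using ca by (simp add: zw field_simps)
  finally have key: "(?z - \<alpha>) * (?z - inverse (cnj \<alpha>)) = (?z - \<alpha>) * (cnj ?z - cnj \<alpha>) * ?z * (- inverse (cnj \<alpha>))" by simp
  have p1: "poly [:-\<alpha>,1:] ?z = ?z - \<alpha>" by simp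
  have p2: "poly [:-inverse (cnj \<alpha>),1:] ?z = ?z - inverse (cnj \<alpha>)" by simp
  show ?thesis
    unfolding Ecirc_def n2 cm poly_mult poly_smult p1 p2 mult.assoc[symmetric] key
    by algebra
qed

lemma FR_step_real:
  assumes "complex_of_real r * w \<in> \<real>" "0 \<le> Re (complex_of_real r * w)" "r > 0"
  shows "w \<in> \<real> \<and> 0 \<le> Re w"
proof -
  have "w = complex_of_real (1/r) * (complex_of_real r * w)" using assms(3) by simp
  moreover have "complex_of_real (1/r) * (complex_of_real r * w) \<in> \<real>"
    by (rule Reals_mult[OF _ assms(1)]) simp
  ultimately have "w \<in> \<real>" by metis
  moreover have "0 \<le> Re w" using assms(2,3) by (simp add: zero_le_mult_iff)
  ultimately show ?thesis by simp
qed

lemma norm_one_of_inv: fixes \<alpha> :: complex assumes "inverse (cnj \<alpha>) = \<alpha>" "\<alpha> \<noteq> 0" shows "cmod \<alpha> = 1"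
proof -
  have c0: "cnj \<alpha> \<noteq> 0" using assms(2) by simp
  have "cnj \<alpha> * \<alpha> = cnj \<alpha> * inverse (cnj \<alpha>)" using assms(1) by simp
  also have "\<dots> = 1" using c0 by (rule right_inverse)
  finally have "cmod (cnj \<alpha> * \<alpha>) = 1" by simp
  hence "cmod \<alpha> * cmod \<alpha> = 1" by (simp add: norm_mult)
  moreover have "cmod \<alpha> \<ge> 0" by simp
  ultimately show ?thesis by (metis abs_of_nonneg abs_square_eq_1 power2_eq_square)
qed

lemma FR:
  "NN F m \<Longrightarrow> \<exists>h. degree h \<le> degree F \<and> (\<forall>x. Ecirc F m x = of_real ((cmod (poly h (cis x)))\<^sup>2))"
proof (induction "degree F" arbitrary: F m rule: less_induct)
  case less
  consider "F = 0" | "F \<noteq> 0" "degree F = 0" | "degree F > 0" by blast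
  then show ?case
  proof cases
    case 1 thus ?thesis by (intro exI[of _ 0]) (simp add: Ecirc_def)
  next
    case 2
    define c where "c = coeff F 0"
    have Fc: "F = [:c:]" using degree_0_id[OF 2(2)] by (simp add: c_def)
    have c0: "c \<noteq> 0" using 2(1) Fc by auto
    have Ec: "Ecirc F m x = cis (- (of_int m * x)) * c" for x by (simp add: Ecirc_def Fc)
    have cr: "c \<in> \<real> \<and> 0 \<le> Re c" using less.prems Ec[of 0] unfolding NN_def by auto
    show ?thesis
    proof (cases "m = 0")
      case True
      have "of_real ((cmod (complex_of_real (sqrt (Re c))))\<^sup>2) = c"
        using cr by (auto simp: complex_is_Real_iff complex_eq_iff)
      thus ?thesis using Ec True
        by (intro exI[of _ "[:complex_of_real (sqrt (Re c)):]"]) (simp add: Fc)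
    next
      case False
      have "cis (- (of_int m * (pi / of_int m))) = -1" using False by (simp add: complex_eq_iff)
      hence "Ecirc F m (pi / of_int m) = - c" by (simp add: Ec)
      hence "0 \<le> Re (- c)" using less.prems unfolding NN_def by metis
      hence "c = 0" using cr by (auto simp: complex_is_Real_iff complex_eq_iff)
      thus ?thesis using c0 by simp
    qed
  next
    case 3
    obtain \<alpha> where root: "poly F \<alpha> = 0" using poly_root_exists[OF 3] by blast
    show ?thesis
    proof (cases "\<alpha> = 0")
      case True
      obtain a F1 where FF: "F = pCons a F1" by (rule pCons_cases)
      have a0: "a = 0" using root True FF by simp
      have F10: "F1 \<noteq> 0" using 3 FF a0 by auto
      have deg: "degree F1 < degree F" using FF F10 by simp
      have EE: "Ecirc F m x = Ecirc F1 (m - 1) x" for x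
      proof -
        have "cis (- (of_int (m - 1) * x)) = cis (- (of_int m * x)) * cis x" by (simp add: cis_mult algebra_simps)
        thus ?thesis by (simp add: Ecirc_def FF a0)
      qed
      have "NN F1 (m - 1)" using less.prems unfolding NN_def EE .
      from less.hyps[OF deg this] obtain h where "degree h \<le> degree F1"
        "\<forall>x. Ecirc F1 (m - 1) x = of_real ((cmod (poly h (cis x)))\<^sup>2)" by blast
      thus ?thesis using deg EE by (intro exI[of _ h]) auto
    next
      case False
      define \<beta> where "\<beta> = inverse (cnj \<alpha>)"
      obtain F1 where F1: "F = [:-\<alpha>,1:] * F1" using root poly_eq_0_iff_dvd by (metis dvdE)
      have "poly F1 \<beta> = 0"
      proof (cases "\<beta> = \<alpha>")
        case False
        have "poly F \<beta> = 0" unfolding \<beta>_def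
          by (rule sym_root[of F m]) (use less.prems \<open>\<alpha> \<noteq> 0\<close> root in \<open>auto simp: NN_def\<close>)
        thus ?thesis using False by (simp add: F1)
      next
        case True
        have "cmod \<alpha> = 1" using True \<open>\<alpha> \<noteq> 0\<close> unfolding \<beta>_def by (intro norm_one_of_inv) auto
        hence ca: "cis (Arg \<alpha>) = \<alpha>" using cis_Arg[OF \<open>\<alpha> \<noteq> 0\<close>] by (simp add: sgn_div_norm)
        have "poly (pderiv F) (cis (Arg \<alpha>)) = 0"
          by (rule circle_root_deriv[OF less.prems]) (simp add: ca root)
        hence "poly (pderiv F) \<alpha> = 0" by (simp add: ca)
        moreover have "pderiv F = [:-\<alpha>,1:] * pderiv F1 + F1 * [:1:]"
          unfolding F1 pderiv_mult by (simp add: pderiv_pCons)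
        ultimately have "poly F1 \<alpha> = 0" by simp
        thus ?thesis using True by simp
      qed
      then obtain F2 where F2: "F1 = [:-\<beta>,1:] * F2" using poly_eq_0_iff_dvd by (metis dvdE)
      have FF: "F = [:-\<alpha>,1:] * [:-inverse (cnj \<alpha>),1:] * F2" unfolding F1 F2 \<beta>_def by (rule mult.assoc[symmetric])
      have F20: "F2 \<noteq> 0" using 3 FF by auto
      have degF: "degree F = degree F2 + 2" unfolding FF using F20
        by (subst degree_mult_eq) (auto simp: degree_mult_eq)
      define G where "G = smult (- inverse (cnj \<alpha>)) F2"
      have degG: "degree G = degree F2" using False by (simp add: G_def)
      have EE: "Ecirc F m x = of_real ((cmod (cis x - \<alpha>))\<^sup>2) * Ecirc G (m - 1) x" for x
        unfolding FF G_def by (rule factor_identity[OF False])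
      have "NN G (m - 1)"
      proof (rule NN_off[of \<alpha>])
        fix x assume "cis x \<noteq> \<alpha>"
        hence pos: "(cmod (cis x - \<alpha>))\<^sup>2 > 0" by simp
        show "Ecirc G (m - 1) x \<in> \<real> \<and> 0 \<le> Re (Ecirc G (m - 1) x)"
        proof -
          have e: "Ecirc F m x \<in> \<real> \<and> 0 \<le> Re (Ecirc F m x)" using less.prems unfolding NN_def by blast
          hence "of_real ((cmod (cis x - \<alpha>))\<^sup>2) * Ecirc G (m - 1) x \<in> \<real> \<and> 0 \<le> Re (of_real ((cmod (cis x - \<alpha>))\<^sup>2) * Ecirc G (m - 1) x)"
            unfolding EE[of x] .
          thus ?thesis using FR_step_real[OF _ _ pos] by blast
        qed
      qed
      from less.hyps[OF _ this] degF degG obtain h2 where h2: "degree h2 \<le> degree G"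
        "\<forall>x. Ecirc G (m - 1) x = of_real ((cmod (poly h2 (cis x)))\<^sup>2)" by auto
      show ?thesis
      proof (intro exI[of _ "[:-\<alpha>,1:] * h2"] conjI allI)
        have "degree ([:-\<alpha>,1:] * h2) \<le> degree [:-\<alpha>,1:] + degree h2" by (rule degree_mult_le)
        thus "degree ([:-\<alpha>,1:] * h2) \<le> degree F" using h2(1) degF degG by simp
      next
        fix x show "Ecirc F m x = of_real ((cmod (poly ([:-\<alpha>,1:] * h2) (cis x)))\<^sup>2)"
        proof -
          have "poly ([:-\<alpha>,1:] * h2) (cis x) = (cis x - \<alpha>) * poly h2 (cis x)" by (simp add: algebra_simps)
          hence "cmod (poly ([:-\<alpha>,1:] * h2) (cis x)) = cmod (cis x - \<alpha>) * cmod (poly h2 (cis x))"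
            by (simp only: norm_mult)
          thus ?thesis using EE[of x] h2(2) by (simp add: power_mult_distrib)
        qed
      qed
    qed
  qed
qed




lemma LBINT_nonneg:
  fixes g :: "real \<Rightarrow> real"
  assumes "\<And>x. x \<in> A \<Longrightarrow> 0 \<le> g x"
  shows "0 \<le> (LBINT x:A. g x)"
  unfolding set_lebesgue_integral_def
  by (rule integral_nonneg_AE) (use assms in \<open>auto simp: indicator_def\<close>)

lemma term_eq:
  "((complex_of_real a - \<i> * complex_of_real b) / 2) * cis y + ((complex_of_real a + \<i> * complex_of_real b) / 2) * cis (- y)
     = complex_of_real (a * cos y + b * sin y)"
  by (simp add: complex_eq_iff field_simps)

lemma trig_to_poly:
  assumes "trig_poly t"
  obtains F :: "complex poly" and M :: nat where "degree F \<le> 2 * M" "\<And>x. Ecirc F (int M) x = complex_of_real (t x)"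
proof -
  obtain M a b where t: "\<And>x. t x = (\<Sum>k\<le>M. a k * cos (real k * x) + b k * sin (real k * x))"
    using assms unfolding trig_poly_def by blast
  define F where "F = (\<Sum>k\<le>M. monom ((complex_of_real (a k) - \<i> * complex_of_real (b k)) / 2) (M + k)
        + monom ((complex_of_real (a k) + \<i> * complex_of_real (b k)) / 2) (M - k))"
  have "degree F \<le> 2 * M" unfolding F_def
    by (intro degree_sum_le degree_add_le order.trans[OF degree_monom_le]) auto
  moreover have "Ecirc F (int M) x = complex_of_real (t x)" for x
  proof -
    have "Ecirc F (int M) x = (\<Sum>k\<le>M. ((complex_of_real (a k) - \<i> * complex_of_real (b k)) / 2) * (cis (- (real M * x)) * cis x ^ (M + k))
        + ((complex_of_real (a k) + \<i> * complex_of_real (b k)) / 2) * (cis (- (real M * x)) * cis x ^ (M - k)))"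
      unfolding Ecirc_def F_def by (simp add: poly_sum poly_monom sum_distrib_left algebra_simps)
    also have "\<dots> = (\<Sum>k\<le>M. complex_of_real (a k * cos (real k * x) + b k * sin (real k * x)))"
    proof (rule sum.cong[OF refl])
      fix k assume k: "k \<in> {..M}"
      have e1: "cis (- (real M * x)) * cis x ^ (M + k) = cis (real k * x)"
        by (simp add: cis_pow cis_mult algebra_simps)
      have e2: "cis (- (real M * x)) * cis x ^ (M - k) = cis (- (real k * x))"
        using k by (simp add: cis_pow cis_mult of_nat_diff algebra_simps)
      show "((complex_of_real (a k) - \<i> * complex_of_real (b k)) / 2) * (cis (- (real M * x)) * cis x ^ (M + k))
        + ((complex_of_real (a k) + \<i> * complex_of_real (b k)) / 2) * (cis (- (real M * x)) * cis x ^ (M - k))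
        = complex_of_real (a k * cos (real k * x) + b k * sin (real k * x))"
        unfolding e1 e2 by (rule term_eq)
    qed
    also have "\<dots> = complex_of_real (t x)" by (simp add: t)
    finally show ?thesis .
  qed
  ultimately show ?thesis using that by blast
qed

lemma sigma2_nonneg:
  assumes "\<And>x. x \<in> {-pi..pi} \<Longrightarrow> 0 \<le> w x"
  shows "0 \<le> sigma2 w n"
proof -
  define S where "S = {LBINT x:{-pi..pi}. (cmod (poly q (cis x)))\<^sup>2 * w x | q :: complex poly. degree q \<le> n \<and> poly q 1 = 1}"
  have "(LBINT x:{-pi..pi}. (cmod (poly [:1:] (cis x)))\<^sup>2 * w x) \<in> S"
    unfolding S_def by (intro CollectI exI[of _ "[:1:]"]) simp
  hence ne: "S \<noteq> {}" by blast
  have "0 \<le> Inf S"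
  proof (rule cInf_greatest[OF ne])
    fix y assume "y \<in> S"
    then obtain q where "y = (LBINT x:{-pi..pi}. (cmod (poly q (cis x)))\<^sup>2 * w x)" unfolding S_def by blast
    thus "0 \<le> y" by (auto intro!: LBINT_nonneg mult_nonneg_nonneg assms)
  qed
  thus ?thesis unfolding sigma2_def S_def .
qed

lemma sigma2_lower:
  assumes "\<And>x. x \<in> {-pi..pi} \<Longrightarrow> 0 \<le> w x" "degree q \<le> n" "poly q 1 = 1"
  shows "sigma2 w n \<le> (LBINT x:{-pi..pi}. (cmod (poly q (cis x)))\<^sup>2 * w x)"
  unfolding sigma2_def
proof (rule cInf_lower)
  show "(LBINT x:{-pi..pi}. (cmod (poly q (cis x)))\<^sup>2 * w x) \<in> {LBINT x:{-pi..pi}. (cmod (poly q (cis x)))\<^sup>2 * w x | q :: complex poly. degree q \<le> n \<and> poly q 1 = 1}"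
    using assms(2,3) by blast
  show "bdd_below {LBINT x:{-pi..pi}. (cmod (poly q (cis x)))\<^sup>2 * w x | q :: complex poly. degree q \<le> n \<and> poly q 1 = 1}"
    by (rule bdd_belowI[of _ 0]) (auto intro!: LBINT_nonneg mult_nonneg_nonneg assms(1))
qed

lemma key_ineq:
  fixes f t :: "real \<Rightarrow> real"
  assumes fnn: "\<forall>x\<in>{-pi..pi}. f x \<ge> 0"
    and h: "\<And>x. t x = (cmod (poly h (cis x)))\<^sup>2" and dh: "degree h \<le> D"
  shows "t 0 * sigma2 f (n + D) \<le> sigma2 (\<lambda>x. f x * t x) n"
proof -
  define S where "S = {LBINT x:{-pi..pi}. (cmod (poly q (cis x)))\<^sup>2 * (f x * t x) | q :: complex poly. degree q \<le> n \<and> poly q 1 = 1}"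
  have "(LBINT x:{-pi..pi}. (cmod (poly [:1:] (cis x)))\<^sup>2 * (f x * t x)) \<in> S"
    unfolding S_def by (intro CollectI exI[of _ "[:1:]"]) simp
  hence ne: "S \<noteq> {}" by blast
  have fnn': "\<And>x. x \<in> {-pi..pi} \<Longrightarrow> 0 \<le> f x" using fnn by blast
  have tnn: "0 \<le> t x" for x by (simp add: h)
  have "t 0 * sigma2 f (n + D) \<le> Inf S"
  proof (rule cInf_greatest[OF ne])
    fix y assume "y \<in> S"
    then obtain q where y: "y = (LBINT x:{-pi..pi}. (cmod (poly q (cis x)))\<^sup>2 * (f x * t x))"
      and q: "degree q \<le> n" "poly q 1 = 1" unfolding S_def by blast
    show "t 0 * sigma2 f (n + D) \<le> y"
    proof (cases "t 0 = 0")
      case True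
      have "0 \<le> y" unfolding y by (auto intro!: LBINT_nonneg mult_nonneg_nonneg fnn' tnn)
      thus ?thesis using True by simp
    next
      case False
      define c where "c = poly h 1"
      have t0: "t 0 = (cmod c)\<^sup>2" by (simp add: h c_def)
      have c0: "c \<noteq> 0" using False t0 by auto
      define p where "p = smult (inverse c) (q * h)"
      have dp: "degree p \<le> n + D"
        unfolding p_def using degree_mult_le[of q h] q(1) dh by (simp add: order.trans)
      have p1: "poly p 1 = 1" using c0 q(2) by (simp add: p_def c_def)
      have eq: "(cmod (poly q (cis x)))\<^sup>2 * (f x * t x) = t 0 * ((cmod (poly p (cis x)))\<^sup>2 * f x)" for x
      proof -
        have np: "cmod (poly p (cis x)) = cmod (poly q (cis x)) * cmod (poly h (cis x)) / cmod c"
          by (simp add: p_def norm_mult norm_inverse divide_inverse mult.commute)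
        have C: "cmod c > 0" using c0 by simp
        show ?thesis unfolding np t0 h[of x] using C by (simp add: power_divide power_mult_distrib field_simps)
      qed
      have "y = t 0 * (LBINT x:{-pi..pi}. (cmod (poly p (cis x)))\<^sup>2 * f x)"
        unfolding y eq by (rule set_integral_mult_right)
      moreover have "sigma2 f (n + D) \<le> (LBINT x:{-pi..pi}. (cmod (poly p (cis x)))\<^sup>2 * f x)"
        by (rule sigma2_lower[OF fnn' dp p1])
      ultimately show ?thesis using tnn[of 0] by (simp add: mult_left_mono)
    qed
  qed
  thus ?thesis unfolding sigma2_def S_def .
qed

lemma ratio_pos:
  fixes s :: "nat \<Rightarrow> real"
  assumes nn: "\<And>n. 0 \<le> s n" and r: "(\<lambda>n. s (Suc n) / s n) \<longlonglongrightarrow> 1"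
  shows "eventually (\<lambda>n. s n > 0) sequentially"
proof -
  have "eventually (\<lambda>n. s (Suc n) / s n > 0) sequentially"
    using order_tendstoD(1)[OF r, of 0] by simp
  thus ?thesis
  proof (rule eventually_mono)
    fix n assume "s (Suc n) / s n > 0"
    hence "s n \<noteq> 0" by auto
    thus "s n > 0" using nn[of n] by simp
  qed
qed

lemma ratio_shift:
  fixes s :: "nat \<Rightarrow> real"
  assumes nn: "\<And>n. 0 \<le> s n" and r: "(\<lambda>n. s (Suc n) / s n) \<longlonglongrightarrow> 1"
  shows "(\<lambda>n. s (n + D) / s n) \<longlonglongrightarrow> 1"
proof (induction D)
  case 0
  have "eventually (\<lambda>n. 1 = s (n + 0) / s n) sequentially"
    using ratio_pos[OF nn r] by (rule eventually_mono) simp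
  thus ?case by (rule Lim_transform_eventually[OF tendsto_const])
next
  case (Suc D)
  have r': "(\<lambda>n. s (Suc (n + D)) / s (n + D)) \<longlonglongrightarrow> 1"
    using LIMSEQ_ignore_initial_segment[OF r, of D] by simp
  have prod: "(\<lambda>n. s (Suc (n + D)) / s (n + D) * (s (n + D) / s n)) \<longlonglongrightarrow> 1 * 1"
    by (rule tendsto_mult[OF r' Suc.IH])
  obtain N where N: "\<And>n. n \<ge> N \<Longrightarrow> s n > 0"
    using ratio_pos[OF nn r] unfolding eventually_sequentially by blast
  have "eventually (\<lambda>n. s (Suc (n + D)) / s (n + D) * (s (n + D) / s n) = s (n + Suc D) / s n) sequentially"
    unfolding eventually_sequentially
  proof (intro exI[of _ N] allI impI)
    fix n assume "N \<le> n"
    hence "s (n + D) > 0" using N by simp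
    thus "s (Suc (n + D)) / s (n + D) * (s (n + D) / s n) = s (n + Suc D) / s n" by simp
  qed
  thus ?case using Lim_transform_eventually[OF prod] by simp
qed

theorem lemma5p1:
  fixes f t :: "real \<Rightarrow> real"
  assumes f_nonneg: "\<forall>x\<in>{-pi..pi}. f x \<ge> 0"
    and f_int: "set_integrable lborel {-pi..pi} f"
    and f_pos: "(LBINT x:{-pi..pi}. f x) > 0"
    and ratio: "(\<lambda>n. sigma2 f (Suc n) / sigma2 f n) \<longlonglongrightarrow> 1"
    and t_trig: "trig_poly t"
    and t_nonneg: "\<forall>x. t x \<ge> 0"
  shows "liminf (\<lambda>n. ereal (sigma2 (\<lambda>x. f x * t x) n / sigma2 f n)) \<ge> ereal (t 0)"
proof -
  obtain F M where dF: "degree F \<le> 2 * M" and EF: "\<And>x. Ecirc F (int M) x = complex_of_real (t x)"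
    using trig_to_poly[OF t_trig] by blast
  have "NN F (int M)" unfolding NN_def EF using t_nonneg by simp
  from FR[OF this] obtain h where dh: "degree h \<le> degree F"
    and hx: "\<forall>x. Ecirc F (int M) x = complex_of_real ((cmod (poly h (cis x)))\<^sup>2)" by blast
  have th: "\<And>x. t x = (cmod (poly h (cis x)))\<^sup>2" using hx EF by (metis of_real_eq_iff)
  define D where "D = 2 * M"
  have dhD: "degree h \<le> D" using dh dF by (simp add: D_def)
  have key: "\<And>n. t 0 * sigma2 f (n + D) \<le> sigma2 (\<lambda>x. f x * t x) n"
    by (rule key_ineq[OF f_nonneg th dhD])
  have nn: "\<And>n. 0 \<le> sigma2 f n" by (rule sigma2_nonneg) (use f_nonneg in auto)
  have lim: "(\<lambda>n. sigma2 f (n + D) / sigma2 f n) \<longlonglongrightarrow> 1" by (rule ratio_shift[OF nn ratio])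
  have ev: "eventually (\<lambda>n. ereal (t 0 * (sigma2 f (n + D) / sigma2 f n)) \<le> ereal (sigma2 (\<lambda>x. f x * t x) n / sigma2 f n)) sequentially"
    using ratio_pos[OF nn ratio]
  proof (rule eventually_mono)
    fix n assume pos: "sigma2 f n > 0"
    have "t 0 * (sigma2 f (n + D) / sigma2 f n) = (t 0 * sigma2 f (n + D)) / sigma2 f n" by simp
    also have "\<dots> \<le> sigma2 (\<lambda>x. f x * t x) n / sigma2 f n"
      by (rule divide_right_mono[OF key]) (use pos in simp)
    finally show "ereal (t 0 * (sigma2 f (n + D) / sigma2 f n)) \<le> ereal (sigma2 (\<lambda>x. f x * t x) n / sigma2 f n)" by simp
  qed
  have L: "((\<lambda>n. ereal (t 0 * (sigma2 f (n + D) / sigma2 f n))) \<longlongrightarrow> ereal (t 0 * 1)) sequentially"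
    unfolding lim_ereal by (rule tendsto_mult[OF tendsto_const lim])
  have "liminf (\<lambda>n. ereal (t 0 * (sigma2 f (n + D) / sigma2 f n))) = ereal (t 0 * 1)"
    by (rule lim_imp_Liminf[OF _ L]) simp
  moreover have "liminf (\<lambda>n. ereal (t 0 * (sigma2 f (n + D) / sigma2 f n))) \<le> liminf (\<lambda>n. ereal (sigma2 (\<lambda>x. f x * t x) n / sigma2 f n))"
    by (rule Liminf_mono[OF ev])
  ultimately show ?thesis by simp
qed


end
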